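(* Let $0<\theta<\frac{\pi}{4}$ and let $N\ge 2$ be an integer. Let $|\psi_{\mathrm{GGHZ}}\rangle=\cos\theta|000\rangle+\sin\theta|111\rangle$ and $|\psi_{\mathrm{GHZ}}\rangle=\frac{1}{\sqrt2}(|000\rangle+|111\rangle)$ be three-qubit states on $\mathcal H_A\otimes\mathcal H_B\otimes\mathcal H_C$. For $x\in\{0,1,2\}$ and $a\in\{0,1\}$ let $P_{a|x}$ be the projector onto the eigenvector of $\sigma_x$ (if $x=0$), $\sigma_y$ (if $x=1$), $\sigma_z$ (if $x=2$) with eigenvalue $(-1)^a$. Define the assemblages on Bob–Charlie $$\sigma^{\mathrm{GGHZ}}_{a|x}=\mathrm{Tr}_A\big[(P_{a|x}\otimes\mathbb 1\otimes\mathbb 1)|\psi_{\mathrm{GGHZ}}\rangle\langle\psi_{\mathrm{GGHZ}}|\big],\qquad \sigma^{\mathrm{GHZ}}_{a|x}=\mathrm{Tr}_A\big[(P_{a|x}\otimes\mathbb 1\otimes\mathbb 1)|\psi_{\mathrm{GHZ}}\rangle\langle\psi_{\mathrm{GHZ}}|\big].$$ Let $P_{\mathrm{fail}}=(1-2\sin^2\theta)^{N-1}$, $P_{\mathrm{success}}=1-P_{\mathrm{fail}}$, and let $\sigma^{\mathrm{dist}}_{a|x}=P_{\mathrm{success}}\,\sigma^{\mathrm{GHZ}}_{a|x}+P_{\mathrm{fail}}\,\sigma^{\mathrm{GGHZ}}_{a|x}$ be the assemblage obtained on average from $N$ copies of $\{\sigma^{\mathrm{GGHZ}}_{a|x}\}$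 by the distillation protocol described in the context. Then $$\mathcal F_A\big(\{\sigma^{\mathrm{dist}}_{a|x}\}_{a,x},\{\sigma^{\mathrm{GHZ}}_{a|x}\}_{a,x}\big)=\sqrt{1-\tfrac12(1-\sin2\theta)(\cos2\theta)^{N-1}}.$$
   Context: $\sigma_x,\sigma_y,\sigma_z$ are the Pauli matrices in the computational basis $\{|0\rangle,|1\rangle\}$. For positive semidefinite operators $A,B$, the fidelity is $\mathcal F(A,B)=\mathrm{Tr}\big[\sqrt{\sqrt A B\sqrt A}\big]$. For two assemblages $\{\sigma_{a|x}\}$, $\{\tau_{a|x}\}$ (collections of unnormalized states indexed by Alice's input $x$ and outcome $a$), the assemblage fidelity is $\mathcal F_A(\{\sigma_{a|x}\},\{\tau_{a|x}\})=\min_x\sum_a\mathcal F(\sigma_{a|x},\tau_{a|x})$. The distillation protocol (one-sided device-independent setting: Alice untrusted, Bob and Charlie trusted): on each of the first $N-1$ copies the trusted party/parties apply a local two-outcome filter (e.g. Bob alone with Kraus operators $K_0=\mathrm{diag}(\tan\theta,1)$, $K_1=\mathrm{diag}(\sqrt{1-\tan^2\theta},0)$); outcome $0$, which occurs with probability $2\sin^2\theta$ per copy, transforms the copy into $\{\sigma^{\mathrm{GHZ}}_{a|x}\}$; copies with outcome $1$ are discarded, and if all first $N-1$ copies fail the untouched $N$-th copy is kept. Thus on average the output is the convex combination $\sigma^{\mathrm{dist}}$ defined in the claim. *)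

theory Defs
  imports Complex_Main "Jordan_Normal_Form.Matrix" "Jordan_Normal_Form.Schur_Decomposition"
begin

(* Matrices are Jordan_Normal_Form complex matrices.  Qubit ordering: a three-qubit
   basis state |a b c> (A,B,C) has index 4a + 2b + c, i.e. the usual Kronecker order. *)

definition mtrace :: "complex mat \<Rightarrow> complex" where
  "mtrace A = (\<Sum>i<dim_row A. A $$ (i,i))"

definition psd :: "nat \<Rightarrow> complex mat \<Rightarrow> bool" where
  "psd n A \<longleftrightarrow> A \<in> carrier_mat n n \<and> mat_adjoint A = A \<and>
     (\<forall>v \<in> carrier_vec n. 0 \<le> Re ((A *\<^sub>v v) \<bullet>c v))"

definition msqrt :: "complex mat \<Rightarrow> complex mat" where
  "msqrt A = (THE B. psd (dim_row A) B \<and> B * B = A)"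

(* fidelity F(A,B) = Tr sqrt(sqrt A B sqrt A)  (real for PSD arguments) *)
definition fidelity :: "complex mat \<Rightarrow> complex mat \<Rightarrow> real" where
  "fidelity A B = Re (mtrace (msqrt (msqrt A * B * msqrt A)))"

(* assemblage fidelity: min over inputs x in {0,1,2} of sum over outcomes a in {0,1};
   an assemblage is a function  a \<Rightarrow> x \<Rightarrow> matrix *)
definition assemblage_fidelity ::
  "(nat \<Rightarrow> nat \<Rightarrow> complex mat) \<Rightarrow> (nat \<Rightarrow> nat \<Rightarrow> complex mat) \<Rightarrow> real" where
  "assemblage_fidelity s t = Min ((\<lambda>x. \<Sum>a<2. fidelity (s a x) (t a x)) ` {..<3})"

definition kron :: "complex mat \<Rightarrow> complex mat \<Rightarrow> complex mat" where
  "kron A B = mat (dim_row A * dim_row B) (dim_col A * dim_col B)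
     (\<lambda>(i,j). A $$ (i div dim_row B, j div dim_col B) * B $$ (i mod dim_row B, j mod dim_col B))"

definition ptrace_first :: "nat \<Rightarrow> nat \<Rightarrow> complex mat \<Rightarrow> complex mat" where
  "ptrace_first dA dR M = mat dR dR (\<lambda>(i,j). \<Sum>k<dA. M $$ (k*dR + i, k*dR + j))"

definition proj_ket :: "complex vec \<Rightarrow> complex mat" where
  "proj_ket v = mat (dim_vec v) (dim_vec v) (\<lambda>(i,j). v $ i * cnj (v $ j))"

definition pauli_x :: "complex mat" where
  "pauli_x = mat 2 2 (\<lambda>(i,j). if i \<noteq> j then 1 else 0)"
definition pauli_y :: "complex mat" where
  "pauli_y = mat 2 2 (\<lambda>(i,j). if i = 0 \<and> j = 1 then - \<i> else if i = 1 \<and> j = 0 then \<i> else 0)"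
definition pauli_z :: "complex mat" where
  "pauli_z = mat 2 2 (\<lambda>(i,j). if i = j then (if i = 0 then 1 else -1) else 0)"

definition pauli :: "nat \<Rightarrow> complex mat" where
  "pauli x = (if x = 0 then pauli_x else if x = 1 then pauli_y else pauli_z)"

(* P_{a|x}: projector onto the eigenvector of pauli x with eigenvalue (-1)^a,
   i.e. the spectral projector (1 + (-1)^a sigma)/2 *)
definition meas_proj :: "nat \<Rightarrow> nat \<Rightarrow> complex mat" where
  "meas_proj a x = (1/2) \<cdot>\<^sub>m (1\<^sub>m 2 + ((-1)^a) \<cdot>\<^sub>m pauli x)"

definition psi_GGHZ :: "real \<Rightarrow> complex vec" where
  "psi_GGHZ \<theta> = vec 8 (\<lambda>i. if i = 0 then complex_of_real (cos \<theta>)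
                          else if i = 7 then complex_of_real (sin \<theta>) else 0)"

definition psi_GHZ :: "complex vec" where
  "psi_GHZ = vec 8 (\<lambda>i. if i = 0 \<or> i = 7 then complex_of_real (1 / sqrt 2) else 0)"

definition assemblage_of :: "complex vec \<Rightarrow> nat \<Rightarrow> nat \<Rightarrow> complex mat" where
  "assemblage_of psi a x =
     ptrace_first 2 4 (kron (kron (meas_proj a x) (1\<^sub>m 2)) (1\<^sub>m 2) * proj_ket psi)"

end

theory Submission imports Defs begin

definition gblk :: "complex \<Rightarrow> complex \<Rightarrow> complex \<Rightarrow> complex \<Rightarrow> complex mat" where
  "gblk a b c d = mat 4 4 (\<lambda>(i,j). if i=0 \<and> j=0 then a else if i=0 \<and> j=3 then b
     else if i=3 \<and> j=0 then c else if i=3 \<and> j=3 then d else 0)"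

lemma sum4: "(\<Sum>k<(4::nat). f k) = f 0 + f 1 + f 2 + (f 3::'a::comm_monoid_add)"
  by (simp add: eval_nat_numeral add.assoc)
lemma sum4': "(\<Sum>k\<in>{0..<(4::nat)}. f k) = f 0 + f 1 + f 2 + (f 3::'a::comm_monoid_add)"
  using sum4 by (metis lessThan_atLeast0)

lemma less4: "(i::nat) < 4 \<longleftrightarrow> i = 0 \<or> i = 1 \<or> i = 2 \<or> i = 3" by auto

lemma gblk_carrier[simp]: "gblk a b c d \<in> carrier_mat 4 4" "dim_row (gblk a b c d) = 4" "dim_col (gblk a b c d) = 4"
  by (auto simp: gblk_def)

lemma gblk_mult: "gblk a b c d * gblk a' b' c' d' = gblk (a*a'+b*c') (a*b'+b*d') (c*a'+d*c') (c*b'+d*d')"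
  apply (rule eq_matI)
  apply (auto simp: gblk_def scalar_prod_def sum4' less4)
  done

lemma adj_entry: "i < dim_col A \<Longrightarrow> j < dim_row A \<Longrightarrow> mat_adjoint A $$ (i,j) = cnj (A $$ (j,i))"
  by (simp add: mat_adjoint_def mat_of_rows_def)

lemma gblk_eq_iff: "gblk a b c d = gblk a' b' c' d' \<longleftrightarrow> a=a' \<and> b=b' \<and> c=c' \<and> d=d'"
proof
  assume h: "gblk a b c d = gblk a' b' c' d'"
  have "\<And>i j. i<4 \<Longrightarrow> j<4 \<Longrightarrow> gblk a b c d $$ (i,j) = gblk a' b' c' d' $$ (i,j)" using h by simp
  from this[of 0 0] this[of 0 3] this[of 3 0] this[of 3 3] show "a=a' \<and> b=b' \<and> c=c' \<and> d=d'"
    by (simp add: gblk_def)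
qed simp

lemma gblk_adj: "mat_adjoint (gblk a b c d) = gblk (cnj a) (cnj c) (cnj b) (cnj d)"
  apply (rule eq_matI)
  apply (auto simp: adj_entry)
  apply (auto simp: gblk_def mat_adjoint_def mat_of_rows_def less4)
  done

lemma gblk_form: "v \<in> carrier_vec 4 \<Longrightarrow>
  (gblk a b c d *\<^sub>v v) \<bullet>c v = a*v$0*cnj (v$0) + b*v$3*cnj(v$0) + c*v$0*cnj(v$3) + d*v$3*cnj(v$3)"
  apply (simp add: gblk_def mult_mat_vec_def scalar_prod_def sum4')
  apply (simp add: ring_distribs add.assoc)
  done
definition H :: "real \<Rightarrow> complex \<Rightarrow> real \<Rightarrow> complex mat" where
  "H p q r = gblk (of_real p) q (cnj q) (of_real r)"

definition blkpos :: "real \<Rightarrow> complex \<Rightarrow> real \<Rightarrow> bool" where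
  "blkpos p q r \<longleftrightarrow> 0 \<le> p \<and> 0 \<le> r \<and> (cmod q)^2 \<le> p*r"

lemma real_form_nonneg:
  fixes p r m x y :: real
  assumes "0 \<le> p" "0 \<le> r" "m^2 \<le> p*r" "0 \<le> m" "0 \<le> x" "0 \<le> y"
  shows "2*m*x*y \<le> p*x^2 + r*y^2"
proof -
  have "m*(x*y) \<le> sqrt (p*r) * (x*y)"
    using assms by (intro mult_right_mono) (auto intro: real_le_rsqrt)
  also have "sqrt (p*r) * (x*y) = (sqrt p * x) * (sqrt r * y)" by (simp add: real_sqrt_mult)
  also have "2 * \<dots> \<le> (sqrt p * x)^2 + (sqrt r * y)^2"
    using sum_squares_bound[of "sqrt p * x" "sqrt r * y"] by (simp add: mult.assoc)
  also have "\<dots> = p*x^2 + r*y^2" using assms by (simp add: power_mult_distrib)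
  finally show ?thesis by linarith
qed

lemma psd_H: assumes "blkpos p q r" shows "psd 4 (H p q r)"
proof -
  have "0 \<le> Re ((H p q r *\<^sub>v v) \<bullet>c v)" if v: "v \<in> carrier_vec 4" for v
  proof -
    let ?x = "v$0" and ?y = "v$3"
    have e0: "Re ((H p q r *\<^sub>v v) \<bullet>c v) = p * ((Re ?x)^2 + (Im ?x)^2) + r * ((Re ?y)^2 + (Im ?y)^2) + 2 * Re (q * ?y * cnj ?x)"
      unfolding H_def gblk_form[OF v]
      by (simp add: power2_eq_square algebra_simps)
    have e: "Re ((H p q r *\<^sub>v v) \<bullet>c v) = p * (cmod ?x)^2 + r * (cmod ?y)^2 + 2 * Re (q * ?y * cnj ?x)"
      unfolding e0 cmod_power2 ..
    have "\<bar>Re (q * ?y * cnj ?x)\<bar> \<le> cmod q * cmod ?x * cmod ?y"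
      using abs_Re_le_cmod[of "q * ?y * cnj ?x"] by (simp add: norm_mult mult.commute mult.left_commute)
    moreover have "2 * (cmod q) * cmod ?x * cmod ?y \<le> p * (cmod ?x)^2 + r * (cmod ?y)^2"
      using assms unfolding blkpos_def by (intro real_form_nonneg) auto
    ultimately show ?thesis unfolding e by linarith
  qed
  then show ?thesis unfolding psd_def H_def by (simp add: gblk_adj)
qed


lemma H_form: "v \<in> carrier_vec 4 \<Longrightarrow> Re ((H p q r *\<^sub>v v) \<bullet>c v) = p * (cmod (v$0))^2 + r * (cmod (v$3))^2 + 2 * Re (q * v$3 * cnj (v$0))"
proof -
  assume v: "v \<in> carrier_vec 4"
  have e0: "Re ((H p q r *\<^sub>v v) \<bullet>c v) = p * ((Re (v$0))^2 + (Im (v$0))^2) + r * ((Re (v$3))^2 + (Im (v$3))^2) + 2 * Re (q * v$3 * cnj (v$0))"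
      unfolding H_def gblk_form[OF v]
      by (simp add: power2_eq_square algebra_simps)
  then show ?thesis unfolding cmod_power2 .
qed

definition v2 :: "complex \<Rightarrow> complex \<Rightarrow> complex vec" where
  "v2 x y = vec 4 (\<lambda>i. if i = 0 then x else if i = 3 then y else 0)"

lemma v2_carrier: "v2 x y \<in> carrier_vec 4" by (simp add: v2_def)

lemma H_form_v2: "Re ((H p q r *\<^sub>v v2 x y) \<bullet>c v2 x y) = p * (cmod x)^2 + r * (cmod y)^2 + 2 * Re (q * y * cnj x)"
  by (subst H_form[OF v2_carrier]) (simp add: v2_def)

lemma mult_cnj_norm: "z * cnj z = complex_of_real ((cmod z)^2)" "cnj z * z = complex_of_real ((cmod z)^2)"
  using complex_norm_square[of z] by (simp_all add: mult.commute)

lemma blkpos_from_form: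
  fixes p r :: real and q :: complex
  assumes f: "\<And>x y. 0 \<le> p * (cmod x)^2 + r * (cmod y)^2 + 2 * Re (q * y * cnj x)"
  shows "blkpos p q r"
proof -
  have qq: "q * cnj q = of_real ((cmod q)^2)" by (rule mult_cnj_norm)
  have p: "0 \<le> p" using f[of 1 0] by simp
  have r: "0 \<le> r" using f[of 0 1] by simp
  have "0 \<le> p * (cmod q)^2 + r * p^2 + 2 * Re (q * of_real p * cnj (- q))"
    using f[of "-q" "of_real p"] by (simp add: abs_of_nonneg p)
  also have "Re (q * of_real p * cnj (- q)) = - p * Re (q * cnj q)"
    by (simp add: algebra_simps)
  also have "Re (q * cnj q) = (cmod q)^2" unfolding qq by simp
  finally have a: "0 \<le> p * (p * r - (cmod q)^2)" by (simp add: algebra_simps power2_eq_square)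
  show ?thesis
  proof (cases "p = 0")
    case True
    have "q = 0"
    proof (rule ccontr)
      assume q: "q \<noteq> 0"
      define s where "s = (r + 1) / (cmod q)^2"
      have "0 \<le> r * 1 + 2 * Re (q * 1 * cnj (- of_real s * q))"
        using f[of "- of_real s * q" 1] True by simp
      also have "Re (q * 1 * cnj (- of_real s * q)) = - s * Re (q * cnj q)"
        by (simp add: algebra_simps)
      also have "Re (q * cnj q) = (cmod q)^2" unfolding qq by simp
      finally have h1: "0 \<le> r + 2 * (- s * (cmod q)^2)" by simp
      have "s * (cmod q)^2 = r + 1" using q by (simp add: s_def)
      then show False using h1 r by linarith
    qed
    then show ?thesis using p r True by (simp add: blkpos_def)
  next
    case False
    then have "0 < p" using p by simp
    then have "0 \<le> p * r - (cmod q)^2" using a by (simp add: zero_le_mult_iff)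
    then show ?thesis using p r by (simp add: blkpos_def)
  qed
qed

lemma real_of_cnj: "z = cnj z \<Longrightarrow> z = complex_of_real (Re z)"
proof -
  assume h: "z = cnj z"
  have "Im z = - Im z" using arg_cong[OF h, of Im] by simp
  then show ?thesis by (simp add: complex_eq_iff)
qed

lemma psd_herm: "psd n B \<Longrightarrow> i < n \<Longrightarrow> j < n \<Longrightarrow> B $$ (i,j) = cnj (B $$ (j,i))"
proof -
  assume "psd n B" "i < n" "j < n"
  then have "B \<in> carrier_mat n n" "mat_adjoint B = B" by (auto simp: psd_def)
  then have "B $$ (i,j) = mat_adjoint B $$ (i,j)" by simp
  also have "\<dots> = cnj (B $$ (j,i))" using \<open>i<n\<close> \<open>j<n\<close> \<open>B \<in> carrier_mat n n\<close> by (simp add: adj_entry)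
  finally show ?thesis .
qed

lemma psd_col_zero:
  assumes B: "psd 4 B" and k: "k < 4" and z: "(B * B) $$ (k,k) = 0" and i: "i < 4"
  shows "B $$ (i,k) = 0"
proof -
  have Bc: "B \<in> carrier_mat 4 4" using B by (simp add: psd_def)
  have t: "B $$ (k,j) * B $$ (j,k) = of_real ((cmod (B $$ (j,k)))^2)" if "j < 4" for j
    unfolding psd_herm[OF B k that] by (rule mult_cnj_norm)
  have "(B * B) $$ (k,k) = (\<Sum>j<4. B $$ (k,j) * B $$ (j,k))"
    using Bc k by (simp add: scalar_prod_def lessThan_atLeast0)
  also have "\<dots> = (\<Sum>j<4. complex_of_real ((cmod (B $$ (j,k)))^2))"
    using t by (intro sum.cong) auto
  also have "\<dots> = of_real (\<Sum>j<4. (cmod (B $$ (j,k)))^2)" by (rule of_real_sum[symmetric])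
  finally have "complex_of_real (\<Sum>j<4. (cmod (B $$ (j,k)))^2) = 0" using z by simp
  then have "(\<Sum>j<4. (cmod (B $$ (j,k)))^2) = 0" by (simp only: of_real_eq_0_iff)
  then have "\<forall>j\<in>{..<4::nat}. (cmod (B $$ (j,k)))^2 = 0"
    by (subst sum_nonneg_eq_0_iff[symmetric]) auto
  then show ?thesis using i by simp
qed

lemma psd_block:
  assumes B: "psd 4 B" and sq: "B * B = H p q r"
  shows "B = H (Re (B $$ (0,0))) (B $$ (0,3)) (Re (B $$ (3,3))) \<and>
         blkpos (Re (B $$ (0,0))) (B $$ (0,3)) (Re (B $$ (3,3)))"
proof -
  have Bc: "B \<in> carrier_mat 4 4" using B by (simp add: psd_def)
  have c1: "B $$ (i,1) = 0" if "i < 4" for i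
    using psd_col_zero[OF B _ _ that, of 1] sq by (simp add: H_def gblk_def)
  have c2: "B $$ (i,2) = 0" if "i < 4" for i
    using psd_col_zero[OF B _ _ that, of 2] sq by (simp add: H_def gblk_def)
  have r1: "B $$ (1,i) = 0" if "i < 4" for i using psd_herm[OF B _ that, of 1] c1[OF that] by simp
  have r2: "B $$ (2,i) = 0" if "i < 4" for i using psd_herm[OF B _ that, of 2] c2[OF that] by simp
  have d0: "B $$ (0,0) = of_real (Re (B $$ (0,0)))"
    by (rule real_of_cnj, rule psd_herm[OF B]) simp_all
  have d3: "B $$ (3,3) = of_real (Re (B $$ (3,3)))"
    by (rule real_of_cnj, rule psd_herm[OF B]) simp_all
  have o: "B $$ (3,0) = cnj (B $$ (0,3))" by (rule psd_herm[OF B]) simp_all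
  have eq: "B = H (Re (B $$ (0,0))) (B $$ (0,3)) (Re (B $$ (3,3)))"
  proof (rule eq_matI)
    fix i j assume i: "i < dim_row (H (Re (B $$ (0,0))) (B $$ (0,3)) (Re (B $$ (3,3))))"
      and j: "j < dim_col (H (Re (B $$ (0,0))) (B $$ (0,3)) (Re (B $$ (3,3))))"
    then have i4: "i < 4" and j4: "j < 4" by (auto simp: H_def)
    show "B $$ (i,j) = H (Re (B $$ (0,0))) (B $$ (0,3)) (Re (B $$ (3,3))) $$ (i,j)"
      using i4 j4 c1 c2 r1 r2 d0 d3 o unfolding H_def gblk_def less4
      by (elim disjE) auto
  qed (use Bc in \<open>auto simp: H_def\<close>)
  have "blkpos (Re (B $$ (0,0))) (B $$ (0,3)) (Re (B $$ (3,3)))"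
  proof (rule blkpos_from_form)
    fix x y
    show "0 \<le> Re (B $$ (0,0)) * (cmod x)^2 + Re (B $$ (3,3)) * (cmod y)^2 + 2 * Re (B $$ (0,3) * y * cnj x)"
    proof -
      have "0 \<le> Re ((B *\<^sub>v v2 x y) \<bullet>c v2 x y)" using B v2_carrier[of x y] unfolding psd_def by blast
      also have "\<dots> = Re ((H (Re (B $$ (0,0))) (B $$ (0,3)) (Re (B $$ (3,3))) *\<^sub>v v2 x y) \<bullet>c v2 x y)"
        using eq by simp
      finally show ?thesis unfolding H_form_v2 .
    qed
  qed
  with eq show ?thesis by blast
qed


lemma H_sq: "H a b c * H a b c = gblk (of_real (a^2 + (cmod b)^2)) (b * of_real (a+c))
                    (cnj b * of_real (a+c)) (of_real (c^2 + (cmod b)^2))"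
  unfolding H_def gblk_mult gblk_eq_iff
  by (simp add: mult_cnj_norm algebra_simps power2_eq_square)

lemma H_sq_eq: "H a b c * H a b c = H p q r \<longleftrightarrow>
   p = a^2 + (cmod b)^2 \<and> q = b * of_real (a+c) \<and> r = c^2 + (cmod b)^2"
  unfolding H_sq H_def[of p q r] gblk_eq_iff of_real_eq_iff by (auto simp del: of_real_add of_real_power)

definition sqd :: "real \<Rightarrow> complex \<Rightarrow> real \<Rightarrow> real" where
  "sqd p q r = sqrt (p*r - (cmod q)^2)"
definition sqt :: "real \<Rightarrow> complex \<Rightarrow> real \<Rightarrow> real" where
  "sqt p q r = sqrt (p + r + 2 * sqd p q r)"
definition sqH :: "real \<Rightarrow> complex \<Rightarrow> real \<Rightarrow> complex mat" where
  "sqH p q r = H ((p + sqd p q r) / sqt p q r) (q / of_real (sqt p q r)) ((r + sqd p q r) / sqt p q r)"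

lemma sq_scalar_exist:
  assumes bp: "blkpos p q r"
  defines "d \<equiv> sqd p q r" and "t \<equiv> sqt p q r"
  shows "blkpos ((p+d)/t) (q / of_real t) ((r+d)/t) \<and>
         p = ((p+d)/t)^2 + (cmod (q / of_real t))^2 \<and>
         q = q / of_real t * of_real ((p+d)/t + (r+d)/t) \<and>
         r = ((r+d)/t)^2 + (cmod (q / of_real t))^2"
proof -
  have p: "0 \<le> p" and r: "0 \<le> r" and m: "(cmod q)^2 \<le> p*r" using bp by (auto simp: blkpos_def)
  have d0: "0 \<le> d" and d2: "d^2 = p*r - (cmod q)^2" using m by (auto simp: d_def sqd_def)
  have t0: "0 \<le> t" and t2: "t^2 = p + r + 2*d" using p r d0 by (auto simp: t_def sqt_def d_def)
  have nq: "cmod (q / of_real t) = cmod q / t" using t0 by (simp add: norm_divide)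
  show ?thesis
  proof (cases "t = 0")
    case True
    then have "p + r + 2*d = 0" using t2 by simp
    then have "p = 0" "r = 0" "d = 0" using p r d0 by linarith+
    then have "q = 0" using m by simp
    then show ?thesis using True \<open>p=0\<close> \<open>r=0\<close> by (simp add: blkpos_def)
  next
    case False
    then have tp: "0 < t" using t0 by simp
    have e1: "p = ((p+d)/t)^2 + (cmod q / t)^2"
    proof -
      have "(p+d)^2 + (cmod q)^2 = p * t^2" using d2 t2 by (simp add: power2_eq_square algebra_simps)
      then show ?thesis using tp by (simp add: field_simps power2_eq_square)
    qed
    have e3: "r = ((r+d)/t)^2 + (cmod q / t)^2"
    proof -
      have "(r+d)^2 + (cmod q)^2 = r * t^2" using d2 t2 by (simp add: power2_eq_square algebra_simps)
      then show ?thesis using tp by (simp add: field_simps power2_eq_square)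
    qed
    have e2: "q = q / of_real t * of_real ((p+d)/t + (r+d)/t)"
    proof -
      have "(p+d)/t + (r+d)/t = (p+r+2*d)/t" by (simp add: add_divide_distrib)
      also have "\<dots> = t^2/t" by (simp add: t2)
      also have "\<dots> = t" using tp by (simp add: power2_eq_square)
      finally have "(p+d)/t + (r+d)/t = t" .
      then show ?thesis using tp by simp
    qed
    have bp': "blkpos ((p+d)/t) (q / of_real t) ((r+d)/t)"
    proof -
      have "0 \<le> d*p" "0 \<le> d*r" "0 \<le> d*d" using d0 p r by simp_all
      moreover have "(p+d)*(r+d) = p*r + d*p + d*r + d*d" by (simp add: algebra_simps)
      moreover have "d*d = p*r - (cmod q)^2" using d2 by (simp add: power2_eq_square)
      ultimately have "(cmod q)^2 \<le> (p+d)*(r+d)" by linarith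
      then have "(cmod q / t)^2 \<le> ((p+d)/t) * ((r+d)/t)" using tp
        by (simp add: field_simps power2_eq_square)
      then show ?thesis unfolding blkpos_def nq using p r d0 tp by simp
    qed
    show ?thesis using bp' e1 e2 e3 nq by simp
  qed
qed

lemma sq_scalar_unique:
  assumes bp: "blkpos a b c" and ep: "p = a^2 + (cmod b)^2" and eq: "q = b * of_real (a+c)"
    and er: "r = c^2 + (cmod b)^2"
  shows "a = (p + sqd p q r) / sqt p q r \<and> b = q / of_real (sqt p q r) \<and> c = (r + sqd p q r) / sqt p q r"
proof -
  have a: "0 \<le> a" and c: "0 \<le> c" and m: "(cmod b)^2 \<le> a*c" using bp by (auto simp: blkpos_def)
  have nq: "cmod q = cmod b * (a + c)" unfolding eq norm_mult norm_of_real using a c by simp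
  have "p*r - (cmod q)^2 = (a*c - (cmod b)^2)^2"
    unfolding ep er nq by (simp add: power2_eq_square algebra_simps)
  then have d: "sqd p q r = a*c - (cmod b)^2" using m by (simp add: sqd_def)
  have "p + r + 2 * (a*c - (cmod b)^2) = (a+c)^2" unfolding ep er by (simp add: power2_eq_square algebra_simps)
  then have "p + r + 2 * sqd p q r = (a+c)^2" using d by simp
  then have t: "sqt p q r = a + c" using a c by (simp add: sqt_def)
  show ?thesis
  proof (cases "a + c = 0")
    case True
    then have "a = 0" "c = 0" using a c by linarith+
    then have "b = 0" using m by simp
    then show ?thesis using t True \<open>a=0\<close> \<open>c=0\<close> by simp
  next
    case False
    then have tp: "0 < a + c" using a c by simp
    have "a = (p + sqd p q r) / sqt p q r"
      unfolding t d unfolding ep using tp by (simp add: field_simps power2_eq_square)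
    moreover have "c = (r + sqd p q r) / sqt p q r"
      unfolding t d unfolding er using tp by (simp add: field_simps power2_eq_square)
    moreover have "b = q / of_real (sqt p q r)"
      unfolding t unfolding eq using tp by (simp del: of_real_add)
    ultimately show ?thesis by blast
  qed
qed

lemma msqrt_H:
  assumes bp: "blkpos p q r"
  shows "msqrt (H p q r) = sqH p q r"
proof -
  have ex: "psd 4 (sqH p q r) \<and> sqH p q r * sqH p q r = H p q r"
    using sq_scalar_exist[OF bp] unfolding sqH_def H_sq_eq
    by (auto intro: psd_H)
  have un: "B = sqH p q r" if B: "psd 4 B" and sq: "B * B = H p q r" for B
  proof -
    obtain a b c where Bh: "B = H a b c" and bp': "blkpos a b c" using psd_block[OF B sq] by blast
    have "p = a^2 + (cmod b)^2 \<and> q = b * of_real (a+c) \<and> r = c^2 + (cmod b)^2"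
      using sq unfolding Bh H_sq_eq .
    then show ?thesis using sq_scalar_unique[OF bp'] unfolding Bh sqH_def by auto
  qed
  show ?thesis unfolding msqrt_def
    apply (simp add: H_def)
    apply (rule the_equality)
    using ex un by (auto simp: H_def)
qed


definition R1 :: "complex \<Rightarrow> complex \<Rightarrow> complex mat" where
  "R1 x y = H ((cmod x)^2) (x * cnj y) ((cmod y)^2)"

lemma R1_gblk: "R1 x y = gblk (x * cnj x) (x * cnj y) (y * cnj x) (y * cnj y)"
  unfolding R1_def H_def by (simp add: mult_cnj_norm(1)[symmetric] mult.commute del: of_real_power)

lemma blkpos_R1: "blkpos ((cmod x)^2) (x * cnj y) ((cmod y)^2)"
  by (simp add: blkpos_def norm_mult power_mult_distrib)

lemma mtrace_H: "mtrace (H x y z) = of_real x + of_real z"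
  by (simp add: mtrace_def H_def gblk_def sum4)

lemma fid_R1_self: "Re (mtrace (msqrt (R1 x y))) = sqrt ((cmod x)^2 + (cmod y)^2)"
proof -
  have d: "sqd ((cmod x)^2) (x * cnj y) ((cmod y)^2) = 0"
    by (simp add: sqd_def norm_mult power_mult_distrib)
  define t where "t = sqrt ((cmod x)^2 + (cmod y)^2)"
  have t: "sqt ((cmod x)^2) (x * cnj y) ((cmod y)^2) = t" by (simp add: sqt_def d t_def)
  have "Re (mtrace (msqrt (R1 x y))) = ((cmod x)^2 + (cmod y)^2) / t"
    unfolding R1_def msqrt_H[OF blkpos_R1] sqH_def d t mtrace_H
    by (simp add: add_divide_distrib)
  also have "\<dots> = t"
  proof (cases "t = 0")
    case True then show ?thesis by (simp add: t_def)
  next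
    case False
    have h: "(cmod x)^2 + (cmod y)^2 = t * t" by (simp add: t_def)
    show ?thesis unfolding h using False by simp
  qed
  finally show ?thesis by (simp add: t_def)
qed

lemma H_R1_H: "H a b c * R1 x y * H a b c = R1 (of_real a * x + b * y) (cnj b * x + of_real c * y)"
  unfolding R1_gblk H_def gblk_mult gblk_eq_iff
  by (simp add: algebra_simps)

lemma fid_R1:
  assumes bp: "blkpos p q r"
  shows "fidelity (H p q r) (R1 w0 w3) = sqrt (p * (cmod w0)^2 + r * (cmod w3)^2 + 2 * Re (q * w3 * cnj w0))"
proof -
  define a where "a = (p + sqd p q r) / sqt p q r"
  define b where "b = q / of_real (sqt p q r)"
  define c where "c = (r + sqd p q r) / sqt p q r"
  have ex: "blkpos a b c \<and> p = a^2 + (cmod b)^2 \<and> q = b * of_real (a + c) \<and> r = c^2 + (cmod b)^2"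
    using sq_scalar_exist[OF bp] unfolding a_def b_def c_def by simp
  have ms: "msqrt (H p q r) = H a b c" unfolding msqrt_H[OF bp] sqH_def a_def b_def c_def ..
  define u0 where "u0 = of_real a * w0 + b * w3"
  define u3 where "u3 = cnj b * w0 + of_real c * w3"
  have "fidelity (H p q r) (R1 w0 w3) = sqrt ((cmod u0)^2 + (cmod u3)^2)"
    unfolding fidelity_def ms H_R1_H u0_def u3_def fid_R1_self ..
  also have "(cmod u0)^2 + (cmod u3)^2 = p * (cmod w0)^2 + r * (cmod w3)^2 + 2 * Re (q * w3 * cnj w0)"
  proof -
    have pe: "complex_of_real p = of_real a * of_real a + b * cnj b"
      using ex by (simp add: mult_cnj_norm power2_eq_square)
    have re: "complex_of_real r = of_real c * of_real c + b * cnj b"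
      using ex by (simp add: mult_cnj_norm power2_eq_square)
    have qe: "q = b * (of_real a + of_real c)" using ex by simp
    have "complex_of_real ((cmod u0)^2 + (cmod u3)^2) = u0 * cnj u0 + u3 * cnj u3"
      by (simp add: mult_cnj_norm)
    also have "\<dots> = complex_of_real p * (w0 * cnj w0) + complex_of_real r * (w3 * cnj w3)
                    + (q * w3 * cnj w0 + cnj (q * w3 * cnj w0))"
      unfolding pe re qe u0_def u3_def by (simp add: algebra_simps)
    also have "\<dots> = complex_of_real (p * (cmod w0)^2 + r * (cmod w3)^2 + 2 * Re (q * w3 * cnj w0))"
      unfolding complex_add_cnj mult_cnj_norm by simp
    finally show ?thesis by (simp only: of_real_eq_iff)
  qed
  finally show ?thesis .
qed


definition psi2 :: "real \<Rightarrow> real \<Rightarrow> complex vec" where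
  "psi2 \<alpha> \<beta> = vec 8 (\<lambda>i. if i = 0 then complex_of_real \<alpha> else if i = 7 then complex_of_real \<beta> else 0)"

lemma sum8: "(\<Sum>k\<in>{0..<(8::nat)}. f k) = f 0 + f 1 + f 2 + f 3 + f 4 + f 5 + f 6 + (f 7::'a::comm_monoid_add)"
  by (simp add: eval_nat_numeral atLeast0_lessThan_Suc add.assoc add.commute add.left_commute)

lemma sum2: "(\<Sum>k<(2::nat). f k) = f 0 + (f 1::'a::comm_monoid_add)"
  by (simp add: eval_nat_numeral)

lemma assemblage_psi2:
  assumes P: "P \<in> carrier_mat 2 2"
  shows "ptrace_first 2 4 (kron (kron P (1\<^sub>m 2)) (1\<^sub>m 2) * proj_ket (psi2 \<alpha> \<beta>))
     = gblk (P$$(0,0) * of_real (\<alpha>*\<alpha>)) (P$$(1,0) * of_real (\<alpha>*\<beta>)) (P$$(0,1) * of_real (\<alpha>*\<beta>)) (P$$(1,1) * of_real (\<beta>*\<beta>))"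
proof (rule eq_matI)
  fix i j assume "i < dim_row (gblk (P$$(0,0) * of_real (\<alpha>*\<alpha>)) (P$$(1,0) * of_real (\<alpha>*\<beta>)) (P$$(0,1) * of_real (\<alpha>*\<beta>)) (P$$(1,1) * of_real (\<beta>*\<beta>)))"
    "j < dim_col (gblk (P$$(0,0) * of_real (\<alpha>*\<alpha>)) (P$$(1,0) * of_real (\<alpha>*\<beta>)) (P$$(0,1) * of_real (\<alpha>*\<beta>)) (P$$(1,1) * of_real (\<beta>*\<beta>)))"
  then have i: "i < 4" and j: "j < 4" by auto
  show "ptrace_first 2 4 (kron (kron P (1\<^sub>m 2)) (1\<^sub>m 2) * proj_ket (psi2 \<alpha> \<beta>)) $$ (i,j) =
     gblk (P$$(0,0) * of_real (\<alpha>*\<alpha>)) (P$$(1,0) * of_real (\<alpha>*\<beta>)) (P$$(0,1) * of_real (\<alpha>*\<beta>)) (P$$(1,1) * of_real (\<beta>*\<beta>)) $$ (i,j)"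
    using i j P unfolding less4
    by (elim disjE) (simp_all add: ptrace_first_def kron_def proj_ket_def psi2_def gblk_def sum2 scalar_prod_def sum8)
qed (auto simp: ptrace_first_def)


definition kk :: real where "kk = 1 / sqrt 2"

lemma kk_sq: "kk * kk = 1/2" "kk^2 = 1/2" by (simp_all add: kk_def power2_eq_square)
lemma kk_sq_c: "complex_of_real kk * complex_of_real kk = 1/2"
  by (metis kk_sq(1) of_real_divide of_real_mult of_real_numeral of_real_1)

lemma kk_sq_c2: "complex_of_real kk * (complex_of_real kk * 2) = 1"
  using kk_sq_c by (simp add: mult.assoc[symmetric])

definition Uf :: "nat \<Rightarrow> nat \<Rightarrow> complex" where
  "Uf a x = (if x = 2 then (if a = 0 then 1 else 0) else complex_of_real kk)"
definition Vf :: "nat \<Rightarrow> nat \<Rightarrow> complex" where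
  "Vf a x = (if x = 0 then (-1)^a * complex_of_real kk
             else if x = 1 then - ((-1)^a) * \<i> * complex_of_real kk
             else (if a = 0 then 0 else 1))"

lemma psi_GHZ_eq: "psi_GHZ = psi2 kk kk"
  unfolding psi_GHZ_def psi2_def kk_def by (intro arg_cong[where f="vec 8"]) auto

lemma psi_GGHZ_eq: "psi_GGHZ \<theta> = psi2 (cos \<theta>) (sin \<theta>)"
  unfolding psi_GGHZ_def psi2_def ..

lemma meas_carrier: "meas_proj a x \<in> carrier_mat 2 2"
  by (simp add: meas_proj_def pauli_def pauli_x_def pauli_y_def pauli_z_def)

lemma assemb_R1:
  assumes a: "a < 2" and x: "x < 3"
  shows "assemblage_of (psi2 \<alpha> \<beta>) a x = R1 (of_real \<alpha> * Uf a x) (of_real \<beta> * Vf a x)"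
proof -
  have a': "a = 0 \<or> a = 1" using a by auto
  have x': "x = 0 \<or> x = 1 \<or> x = 2" using x by auto
  show ?thesis
    unfolding assemblage_of_def assemblage_psi2[OF meas_carrier] R1_gblk gblk_eq_iff
    using a' x'
    by (elim disjE) (simp_all add: meas_proj_def pauli_def pauli_x_def pauli_y_def pauli_z_def
         Uf_def Vf_def algebra_simps kk_sq_c kk_sq_c2)
qed


lemma smult_gblk: "z \<cdot>\<^sub>m gblk a b c d = gblk (z*a) (z*b) (z*c) (z*d)"
  by (rule eq_matI) (auto simp: gblk_def)

lemma add_gblk: "gblk a b c d + gblk a' b' c' d' = gblk (a+a') (b+b') (c+c') (d+d')"
  by (rule eq_matI) (auto simp: gblk_def)

lemma sum_R1:
  "complex_of_real s \<cdot>\<^sub>m R1 g0 g3 + complex_of_real t \<cdot>\<^sub>m R1 h0 h3 =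
   H (s*(cmod g0)^2 + t*(cmod h0)^2) (of_real s * (g0 * cnj g3) + of_real t * (h0 * cnj h3))
     (s*(cmod g3)^2 + t*(cmod h3)^2)"
  unfolding R1_def H_def smult_gblk add_gblk gblk_eq_iff by simp

lemma blkpos_sum:
  assumes s: "0 \<le> s" and t: "0 \<le> t"
  shows "blkpos (s*(cmod g0)^2 + t*(cmod h0)^2) (of_real s * (g0 * cnj g3) + of_real t * (h0 * cnj h3))
     (s*(cmod g3)^2 + t*(cmod h3)^2)"
proof -
  define p where "p = s*(cmod g0)^2 + t*(cmod h0)^2"
  define r where "r = s*(cmod g3)^2 + t*(cmod h3)^2"
  define q where "q = of_real s * (g0 * cnj g3) + of_real t * (h0 * cnj h3)"
  define D where "D = g0 * h3 - h0 * g3"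
  have pc: "complex_of_real p = of_real s * (g0 * cnj g0) + of_real t * (h0 * cnj h0)"
    unfolding p_def mult_cnj_norm by simp
  have rc: "complex_of_real r = of_real s * (g3 * cnj g3) + of_real t * (h3 * cnj h3)"
    unfolding r_def mult_cnj_norm by simp
  have "complex_of_real (p * r - (cmod q)^2) = complex_of_real p * complex_of_real r - q * cnj q"
    unfolding mult_cnj_norm by simp
  also have "\<dots> = of_real (s*t) * (D * cnj D)"
    unfolding pc rc q_def D_def by (simp add: algebra_simps)
  also have "\<dots> = complex_of_real (s * t * (cmod D)^2)" unfolding mult_cnj_norm by simp
  finally have "p * r - (cmod q)^2 = s * t * (cmod D)^2" by (simp only: of_real_eq_iff)
  moreover have "0 \<le> s * t * (cmod D)^2" using s t by simp
  ultimately have "(cmod q)^2 \<le> p*r" by linarith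
  then show ?thesis using s t unfolding blkpos_def by (simp add: p_def r_def q_def)
qed

lemma qf_sum:
  "(s*(cmod g0)^2 + t*(cmod h0)^2) * (cmod w0)^2 + (s*(cmod g3)^2 + t*(cmod h3)^2) * (cmod w3)^2
    + 2 * Re ((of_real s * (g0 * cnj g3) + of_real t * (h0 * cnj h3)) * w3 * cnj w0)
   = s * (cmod (cnj w0 * g0 + cnj w3 * g3))^2 + t * (cmod (cnj w0 * h0 + cnj w3 * h3))^2"
proof -
  let ?q = "of_real s * (g0 * cnj g3) + of_real t * (h0 * cnj h3)"
  have "complex_of_real ((s*(cmod g0)^2 + t*(cmod h0)^2) * (cmod w0)^2 + (s*(cmod g3)^2 + t*(cmod h3)^2) * (cmod w3)^2
    + 2 * Re (?q * w3 * cnj w0))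
    = (of_real s * (g0 * cnj g0) + of_real t * (h0 * cnj h0)) * (w0 * cnj w0)
      + (of_real s * (g3 * cnj g3) + of_real t * (h3 * cnj h3)) * (w3 * cnj w3)
      + (?q * w3 * cnj w0 + cnj (?q * w3 * cnj w0))"
    unfolding complex_add_cnj mult_cnj_norm by simp
  also have "\<dots> = of_real s * ((cnj w0 * g0 + cnj w3 * g3) * cnj (cnj w0 * g0 + cnj w3 * g3))
      + of_real t * ((cnj w0 * h0 + cnj w3 * h3) * cnj (cnj w0 * h0 + cnj w3 * h3))"
    by (simp add: algebra_simps)
  also have "\<dots> = complex_of_real (s * (cmod (cnj w0 * g0 + cnj w3 * g3))^2 + t * (cmod (cnj w0 * h0 + cnj w3 * h3))^2)"
    unfolding mult_cnj_norm by simp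
  finally show ?thesis by (simp only: of_real_eq_iff)
qed

definition nU :: "nat \<Rightarrow> nat \<Rightarrow> real" where
  "nU a x = (if x = 2 then (if a = 0 then 1 else 0) else 1/2)"
definition nV :: "nat \<Rightarrow> nat \<Rightarrow> real" where
  "nV a x = (if x = 2 then (if a = 0 then 0 else 1) else 1/2)"

lemma UV_inner:
  assumes a: "a < 2" and x: "x < 3"
  shows "cnj (of_real kk * Uf a x) * (of_real kk * Uf a x) + cnj (of_real kk * Vf a x) * (of_real kk * Vf a x) = 1/2"
    and "cnj (of_real kk * Uf a x) * (of_real c * Uf a x) + cnj (of_real kk * Vf a x) * (of_real s * Vf a x)
         = of_real (kk * (c * nU a x + s * nV a x))"
proof -
  have a': "a = 0 \<or> a = 1" using a by auto
  have x': "x = 0 \<or> x = 1 \<or> x = 2" using x by auto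
  show "cnj (of_real kk * Uf a x) * (of_real kk * Uf a x) + cnj (of_real kk * Vf a x) * (of_real kk * Vf a x) = 1/2"
    using a' x' by (elim disjE) (simp_all add: Uf_def Vf_def algebra_simps kk_sq_c kk_sq_c2)
  show "cnj (of_real kk * Uf a x) * (of_real c * Uf a x) + cnj (of_real kk * Vf a x) * (of_real s * Vf a x)
         = of_real (kk * (c * nU a x + s * nV a x))"
    using a' x' by (elim disjE) (simp_all add: Uf_def Vf_def nU_def nV_def algebra_simps kk_sq_c kk_sq_c2)
qed

lemma fid_case:
  assumes a: "a < 2" and x: "x < 3" and s: "0 \<le> Ps" and t: "0 \<le> Pf"
  shows "fidelity (complex_of_real Ps \<cdot>\<^sub>m assemblage_of psi_GHZ a x + complex_of_real Pf \<cdot>\<^sub>m assemblage_of (psi_GGHZ \<theta>) a x)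
           (assemblage_of psi_GHZ a x)
         = sqrt (Ps/4 + Pf/2 * (cos \<theta> * nU a x + sin \<theta> * nV a x)^2)"
proof -
  note i1 = UV_inner(1)[OF a x]
  note i2 = UV_inner(2)[OF a x, of "cos \<theta>" "sin \<theta>"]
  show ?thesis
    unfolding psi_GHZ_eq psi_GGHZ_eq assemb_R1[OF a x] sum_R1 fid_R1[OF blkpos_sum[OF s t]] qf_sum
    unfolding i1 i2 norm_of_real power2_abs
    by (simp add: power_mult_distrib kk_sq(2) power_divide)
qed


lemma sqrt_sum_ge:
  fixes A B C :: real
  assumes A: "0 \<le> A" and B: "0 \<le> B" and K: "0 \<le> K" and AB: "A + B + 2 * K \<ge> C" and KK: "K^2 \<le> A * B"
  shows "sqrt C \<le> sqrt A + sqrt B"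
proof -
  have "K \<le> sqrt (A * B)" using KK K by (simp add: real_le_rsqrt)
  then have "K \<le> sqrt A * sqrt B" by (simp add: real_sqrt_mult)
  then have "C \<le> (sqrt A + sqrt B)^2" using AB A B by (simp add: power2_sum)
  then have "sqrt C \<le> sqrt ((sqrt A + sqrt B)^2)" by (rule real_sqrt_le_mono)
  also have "\<dots> = sqrt A + sqrt B" using A B by simp
  finally show ?thesis .
qed

theorem theorem1:
  fixes \<theta> :: real and N :: nat
  assumes "0 < \<theta>" and "\<theta> < pi / 4" and "N \<ge> 2"
  defines "P_fail \<equiv> (1 - 2 * (sin \<theta>)^2) ^ (N - 1)"
  defines "P_success \<equiv> 1 - P_fail"
  defines "sigma_dist \<equiv> (\<lambda>a x. complex_of_real P_success \<cdot>\<^sub>m assemblage_of psi_GHZ a x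
                         + complex_of_real P_fail \<cdot>\<^sub>m assemblage_of (psi_GGHZ \<theta>) a x)"
  shows "assemblage_fidelity sigma_dist (assemblage_of psi_GHZ)
           = sqrt (1 - (1/2) * (1 - sin (2 * \<theta>)) * (cos (2 * \<theta>)) ^ (N - 1))"
proof -
  define c where "c = cos \<theta>"
  define s where "s = sin \<theta>"
  define T where "T = sqrt (1 - (1/2) * (1 - sin (2 * \<theta>)) * (cos (2 * \<theta>)) ^ (N - 1))"
  have Pf: "P_fail = cos (2 * \<theta>) ^ (N - 1)" unfolding P_fail_def cos_double_sin ..
  have cpos: "0 < cos (2 * \<theta>)" using assms(1,2) by (intro cos_gt_zero_pi) auto
  have cle: "cos (2 * \<theta>) \<le> 1" by simp
  have Pf0: "0 \<le> P_fail" unfolding Pf using cpos by simp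
  have Pf1: "P_fail \<le> 1" unfolding Pf using cpos cle by (simp add: power_le_one)
  have Ps0: "0 \<le> P_success" unfolding P_success_def using Pf1 by simp
  have sd: "sin (2 * \<theta>) = 2 * s * c" unfolding s_def c_def sin_double ..
  have sc1: "s^2 + c^2 = 1" unfolding s_def c_def by simp
  have c0: "0 \<le> c" unfolding c_def using assms(1,2) by (intro cos_ge_zero) auto
  have s0: "0 \<le> s" unfolding s_def using assms(1,2) by (intro sin_ge_zero) auto
  have sle: "2 * s * c \<le> 1" using sd sin_le_one[of "2*\<theta>"] by simp
  have F: "(\<Sum>a<2. fidelity (sigma_dist a x) (assemblage_of psi_GHZ a x)) =
      sqrt (P_success/4 + P_fail/2 * (c * nU 0 x + s * nV 0 x)^2)
    + sqrt (P_success/4 + P_fail/2 * (c * nU 1 x + s * nV 1 x)^2)" if x: "x < 3" for x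
  proof -
    have h: "fidelity (sigma_dist a x) (assemblage_of psi_GHZ a x) = sqrt (P_success/4 + P_fail/2 * (c * nU a x + s * nV a x)^2)"
      if "a < 2" for a
      unfolding sigma_dist_def c_def s_def by (rule fid_case[OF that x Ps0 Pf0])
    show ?thesis unfolding sum2 using h[of 0] h[of 1] by simp
  qed
  have F0: "(\<Sum>a<2. fidelity (sigma_dist a 0) (assemblage_of psi_GHZ a 0)) = T"
   and F1: "(\<Sum>a<2. fidelity (sigma_dist a 1) (assemblage_of psi_GHZ a 1)) = T"
  proof -
    define Y where "Y = P_success/4 + P_fail/2 * (c/2 + s/2)^2"
    have "sqrt Y + sqrt Y = sqrt (4 * Y)" by (simp add: real_sqrt_mult)
    also have "4 * Y = 1 - (1/2) * (1 - sin (2 * \<theta>)) * (cos (2 * \<theta>)) ^ (N - 1)"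
    proof -
      have "4 * Y = P_success + P_fail/2 * (s^2 + c^2) + P_fail * s * c"
        unfolding Y_def by (simp add: field_simps power2_eq_square)
      also have "\<dots> = 1 - (1/2) * (1 - 2 * s * c) * P_fail"
        unfolding sc1 P_success_def by (simp add: field_simps)
      finally show ?thesis unfolding sd Pf[symmetric] .
    qed
    finally have e: "sqrt Y + sqrt Y = T" unfolding T_def .
    show "(\<Sum>a<2. fidelity (sigma_dist a 0) (assemblage_of psi_GHZ a 0)) = T"
      using e unfolding F[of 0, simplified] Y_def by (simp add: nU_def nV_def)
    show "(\<Sum>a<2. fidelity (sigma_dist a 1) (assemblage_of psi_GHZ a 1)) = T"
    proof -
      have "(\<Sum>a<2. fidelity (sigma_dist a 1) (assemblage_of psi_GHZ a 1)) =
        sqrt (P_success/4 + P_fail/2 * (c * nU 0 1 + s * nV 0 1)^2)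
        + sqrt (P_success/4 + P_fail/2 * (c * nU 1 1 + s * nV 1 1)^2)" by (rule F) simp
      also have "\<dots> = sqrt Y + sqrt Y" unfolding Y_def by (simp add: nU_def nV_def)
      finally show ?thesis using e by simp
    qed
  qed
  have F2: "T \<le> (\<Sum>a<2. fidelity (sigma_dist a 2) (assemblage_of psi_GHZ a 2))"
  proof -
    have e: "(\<Sum>a<2. fidelity (sigma_dist a 2) (assemblage_of psi_GHZ a 2)) =
       sqrt (P_success/4 + P_fail/2 * c^2) + sqrt (P_success/4 + P_fail/2 * s^2)"
      unfolding F[of 2, simplified] by (simp add: nU_def nV_def)
    have T': "T = sqrt (P_success + P_fail/2 * (1 + 2 * s * c))"
      unfolding T_def sd Pf[symmetric] P_success_def by (simp add: algebra_simps)
    show ?thesis unfolding e T'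
    proof (rule sqrt_sum_ge[where K = "(P_success/2 + P_fail * s * c)/2"])
      show "0 \<le> P_success/4 + P_fail/2 * c^2" using Ps0 Pf0 by simp
      show "0 \<le> P_success/4 + P_fail/2 * s^2" using Ps0 Pf0 by simp
      show "0 \<le> (P_success/2 + P_fail * s * c)/2" using Ps0 Pf0 s0 c0 by simp
      show "P_success + P_fail/2 * (1 + 2 * s * c) \<le>
          P_success/4 + P_fail/2 * c^2 + (P_success/4 + P_fail/2 * s^2) + 2 * ((P_success/2 + P_fail * s * c)/2)"
      proof -
        have "P_success/4 + P_fail/2 * c^2 + (P_success/4 + P_fail/2 * s^2) + 2 * ((P_success/2 + P_fail * s * c)/2)
           = P_success + P_fail/2 * (s^2 + c^2) + P_fail * s * c"
          by (simp add: field_simps)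
        also have "\<dots> = P_success + P_fail/2 * (1 + 2 * s * c)" unfolding sc1 by (simp add: field_simps)
        finally show ?thesis by simp
      qed
      have "0 \<le> P_success * P_fail * (1 - 2 * s * c)" using Ps0 Pf0 sle by simp
      moreover have "(P_success/4 + P_fail/2 * c^2) * (P_success/4 + P_fail/2 * s^2) - ((P_success/2 + P_fail * s * c)/2)^2
          = P_success * P_fail * (1 - 2 * s * c) / 8"
      proof -
        have "(P_success/4 + P_fail/2 * c^2) * (P_success/4 + P_fail/2 * s^2) - ((P_success/2 + P_fail * s * c)/2)^2
          = P_success * P_fail * ((s^2 + c^2) - 2 * s * c) / 8"
          by (simp add: field_simps power2_eq_square)
        then show ?thesis unfolding sc1 .
      qed
      ultimately show "((P_success/2 + P_fail * s * c)/2)^2 \<le> (P_success/4 + P_fail/2 * c^2) * (P_success/4 + P_fail/2 * s^2)"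
        by linarith
    qed
  qed
  have l3: "{..<3::nat} = {0,1,2}" by auto
  have img: "(\<lambda>x. \<Sum>a<2. fidelity (sigma_dist a x) (assemblage_of psi_GHZ a x)) ` {..<3} =
     {T, T, (\<Sum>a<2. fidelity (sigma_dist a 2) (assemblage_of psi_GHZ a 2))}"
    unfolding l3 image_insert image_empty F0 F1 ..
  show ?thesis
    unfolding assemblage_fidelity_def img T_def[symmetric] using F2 by (simp add: min_def)
qed

end
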